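(* Let $k\ge 2$ and $n\ge 3$ be integers. Let $K$ be the graph with vertex set $\{a,b,v_1,\dots,v_{n-1}\}$ in which $v_1,\dots,v_{n-1}$ are pairwise adjacent, $a$ is adjacent exactly to $v_1,\dots,v_{n-2}$, and $b$ is adjacent exactly to $v_{n-1}$. Then for all integers $0\le x,y\le kn-2$, the graph $K$ has a $(kn-1,k)$-coloring $c$ with $c(a)=x$ and $c(b)=y$ if and only if $x\neq y$.
   Context: For positive integers $p,q$, a $(p,q)$-coloring of a graph $G$ is a map $c:V(G)\to\{0,1,\dots,p-1\}$ such that for every edge $xy\in E(G)$ one has $q\le |c(x)-c(y)|\le p-q$. *)

theory Defs
  imports Main
begin

definition pq_coloring :: "nat \<Rightarrow> nat \<Rightarrow> 'v set \<Rightarrow> ('v \<Rightarrow> 'v \<Rightarrow> bool) \<Rightarrow> ('v \<Rightarrow> int) \<Rightarrow> bool" where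
  "pq_coloring p q V E c \<longleftrightarrow>
     (\<forall>x\<in>V. 0 \<le> c x \<and> c x \<le> int p - 1) \<and>
     (\<forall>x\<in>V. \<forall>y\<in>V. E x y \<longrightarrow> int q \<le> \<bar>c x - c y\<bar> \<and> \<bar>c x - c y\<bar> \<le> int p - int q)"

datatype kvert = VA | VB | VV nat

definition K_verts :: "nat \<Rightarrow> kvert set" where
  "K_verts n = {VA, VB} \<union> {VV i | i. 1 \<le> i \<and> i \<le> n - 1}"

fun K_adj0 :: "nat \<Rightarrow> kvert \<Rightarrow> kvert \<Rightarrow> bool" where
  "K_adj0 n (VV i) (VV j) = (i \<noteq> j \<and> 1 \<le> i \<and> i \<le> n - 1 \<and> 1 \<le> j \<and> j \<le> n - 1)"
| "K_adj0 n VA (VV i) = (1 \<le> i \<and> i \<le> n - 2)"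
| "K_adj0 n VB (VV i) = (i = n - 1)"
| "K_adj0 n _ _ = False"

definition K_adj :: "nat \<Rightarrow> kvert \<Rightarrow> kvert \<Rightarrow> bool" where
  "K_adj n x y \<longleftrightarrow> K_adj0 n x y \<or> K_adj0 n y x"

end

theory Submission
  imports Defs
begin

lemma modrange:
  fixes p k D :: int
  assumes "0 < k" "(k \<le> D \<and> D \<le> p - k) \<or> (k - p \<le> D \<and> D \<le> -k)"
  shows "k \<le> D mod p \<and> D mod p \<le> p - k"
proof (cases "k \<le> D")
  case True then have "D mod p = D" using assms by (intro mod_pos_pos_trivial) auto
  then show ?thesis using assms True by auto
next
  case False
  then have "D mod p = (D + p) mod p" by simp
  also have "... = D + p" using assms False by (intro mod_pos_pos_trivial) auto
  finally show ?thesis using assms False by auto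
qed

lemma absrange:
  fixes p k a b :: int
  assumes "0 \<le> a" "a < p" "0 \<le> b" "b < p" "k \<le> (a - b) mod p" "(a-b) mod p \<le> p - k"
  shows "k \<le> \<bar>a - b\<bar> \<and> \<bar>a - b\<bar> \<le> p - k"
proof (cases "b \<le> a")
  case True then have "(a-b) mod p = a - b" using assms by (intro mod_pos_pos_trivial) auto
  then show ?thesis using assms True by auto
next
  case False then have "(a-b) mod p = (a - b + p) mod p" by simp
  also have "... = a - b + p" using assms False by (intro mod_pos_pos_trivial) auto
  finally show ?thesis using assms False by auto
qed

lemma offs:
  fixes x s t p k :: int
  assumes "0 < k" "0 < p" "(k \<le> s - t \<and> s - t \<le> p - k) \<or> (k - p \<le> s - t \<and> s - t \<le> -k)"
  shows "k \<le> \<bar>(x+s) mod p - (x+t) mod p\<bar> \<and> \<bar>(x+s) mod p - (x+t) mod p\<bar> \<le> p - k"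
proof -
  have "((x+s) mod p - (x+t) mod p) mod p = (x + s - (x+t)) mod p" by (simp add: mod_diff_eq)
  also have "\<dots> = (s - t) mod p" by simp
  finally have e: "((x+s) mod p - (x+t) mod p) mod p = (s - t) mod p" .
  show ?thesis using modrange[OF assms(1) assms(3)] assms(2)
    by (intro absrange) (auto simp: e)
qed



lemma mulk: "(i::nat) < j \<Longrightarrow> int i * int k + int k \<le> int j * int k"
proof -
  assume "i < j"
  then have "Suc i \<le> j" by simp
  then have "Suc i * k \<le> j * k" by (rule mult_le_mono1)
  then show ?thesis by (simp add: of_nat_mult[symmetric] del: of_nat_mult) 
qed

lemma dvd_small:
  fixes p z :: int
  assumes "p dvd z" "-p < z" "z < p"
  shows "z = 0"
proof (rule ccontr)
  assume "z \<noteq> 0"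
  then have "\<bar>p\<bar> \<le> \<bar>z\<bar>" using assms(1) by (rule dvd_imp_le_int)
  then show False using assms(2,3) by linarith
qed

theorem lemma3:
  fixes k n :: nat and x y :: int
  assumes "k \<ge> 2" and "n \<ge> 3"
    and "0 \<le> x" and "x \<le> int (k * n) - 2" and "0 \<le> y" and "y \<le> int (k * n) - 2"
  shows "(\<exists>c. pq_coloring (k * n - 1) k (K_verts n) (K_adj n) c \<and> c VA = x \<and> c VB = y)
         \<longleftrightarrow> x \<noteq> y"
proof -
  define P where "P = int k * int n - 1"
  define K where "K = int k"
  define m where "m = int k * int n"
  have kn1: "k * n \<ge> 1" using assms(1,2) by (metis One_nat_def le_trans mult_le_mono nat_mult_1 one_le_numeral Suc_leD)
  have Pe: "int (k*n - 1) = P" using kn1 unfolding P_def by (simp add: of_nat_diff)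
  have mP: "P = m - 1" unfolding P_def m_def by simp
  have m3: "3 * K \<le> m" unfolding K_def m_def
  proof -
    have "3 * k \<le> k * n" using assms(2) by simp
    then show "3 * int k \<le> int k * int n" by (metis of_nat_le_iff of_nat_mult of_nat_numeral)
  qed
  have K2: "K \<ge> 2" using assms(1) unfolding K_def by simp
  have xr: "0 \<le> x" "x \<le> P - 1" "0 \<le> y" "y \<le> P - 1" using assms(3-6) unfolding P_def by auto
  have col: "pq_coloring (k*n-1) k (K_verts n) (K_adj n) c \<longleftrightarrow>
     (\<forall>v\<in>K_verts n. 0 \<le> c v \<and> c v \<le> P - 1) \<and>
     (\<forall>u\<in>K_verts n. \<forall>v\<in>K_verts n. K_adj n u v \<longrightarrow> K \<le> \<bar>c u - c v\<bar> \<and> \<bar>c u - c v\<bar> \<le> P - K)" for c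
    unfolding pq_coloring_def Pe K_def by simp
  have Vmem: "VV i \<in> K_verts n" if "1 \<le> i" "i \<le> n - 1" for i using that by (simp add: K_verts_def)
  have VAm: "VA \<in> K_verts n" and VBm: "VB \<in> K_verts n" by (simp_all add: K_verts_def)
  have ik: "K \<le> int i * K \<and> int i * K \<le> m - 2 * K" if "1 \<le> i" "i \<le> n - 2" for i
  proof -
    have "1 * k \<le> i * k" using that(1) by (rule mult_le_mono1)
    moreover have "i * k \<le> (n - 2) * k" using that(2) by (rule mult_le_mono1)
    moreover have "int ((n - 2) * k) = m - 2 * K" using assms(2) unfolding m_def K_def
      by (simp add: of_nat_diff algebra_simps)
    ultimately show ?thesis unfolding K_def
      by (metis of_nat_le_iff of_nat_mult mult_1)
  qed
  show ?thesis
  proof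
    assume "\<exists>c. pq_coloring (k * n - 1) k (K_verts n) (K_adj n) c \<and> c VA = x \<and> c VB = y"
    then obtain c where cc: "pq_coloring (k * n - 1) k (K_verts n) (K_adj n) c" and cA: "c VA = x" and cB: "c VB = y"
      by blast
    note cc = cc[unfolded col]
    show "x \<noteq> y"
    proof
      assume xy: "x = y"
      define g where "g i = (if i = 0 then x else c (VV i))" for i :: nat
      have grange: "0 \<le> g i \<and> g i \<le> P - 1" if "i < n" for i
        using that cc xr Vmem[of i] unfolding g_def by auto
      have gd0: "K \<le> \<bar>g 0 - g j\<bar> \<and> \<bar>g 0 - g j\<bar> \<le> P - K" if "1 \<le> j" "j < n" for j
      proof (cases "j \<le> n - 2")
        case True
        then have "K_adj n VA (VV j)" using that by (simp add: K_adj_def)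
        then show ?thesis using cc VAm Vmem[of j] that cA unfolding g_def by auto
      next
        case False
        then have "j = n - 1" using that by simp
        then have "K_adj n VB (VV j)" by (simp add: K_adj_def)
        then show ?thesis using cc VBm Vmem[of j] that cB xy unfolding g_def by auto
      qed
      have gdist: "K \<le> \<bar>g i - g j\<bar> \<and> \<bar>g i - g j\<bar> \<le> P - K" if "i < n" "j < n" "i \<noteq> j" for i j
      proof (cases "i = 0")
        case True then show ?thesis using gd0[of j] that by simp
      next
        case False
        show ?thesis
        proof (cases "j = 0")
          case True then show ?thesis using gd0[of i] that False by (simp add: abs_minus_commute)
        next
          case False2: False
          have "K_adj n (VV i) (VV j)" using that False False2 by (simp add: K_adj_def) arith
          then show ?thesis using cc Vmem[of i] Vmem[of j] that False False2 unfolding g_def by auto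
        qed
      qed
      define f where "f = (\<lambda>(i::nat, j::nat). (g i + int j) mod P)"
      have Ppos: "P > 0" using m3 K2 mP by linarith
      have inj: "inj_on f ({0..<n} \<times> {0..<k})"
      proof (rule inj_onI)
        fix a b assume a: "a \<in> {0..<n} \<times> {0..<k}" and b: "b \<in> {0..<n} \<times> {0..<k}" and fab: "f a = f b"
        obtain i j where aij: "a = (i, j)" by (cases a)
        obtain i' j' where bij: "b = (i', j')" by (cases b)
        have ij: "i < n" "j < k" "i' < n" "j' < k" using a b aij bij by auto
        have "P dvd (g i + int j) - (g i' + int j')" using fab unfolding f_def aij bij
          by (simp add: mod_eq_dvd_iff)
        show "a = b"
        proof (cases "i = i'")
          case True
          have "(g i + int j) - (g i' + int j') = 0"
            using dvd_small[OF \<open>P dvd _\<close>] True ij m3 mP unfolding K_def by auto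
          then show ?thesis using True aij bij by simp
        next
          case False
          have "K \<le> \<bar>g i - g i'\<bar> \<and> \<bar>g i - g i'\<bar> \<le> P - K" using gdist[OF ij(1,3) False] .
          then have "-P < (g i + int j) - (g i' + int j') \<and> (g i + int j) - (g i' + int j') < P
                 \<and> (g i + int j) - (g i' + int j') \<noteq> 0"
            using ij unfolding K_def by (auto simp: abs_if split: if_splits)
          then show ?thesis using dvd_small[OF \<open>P dvd _\<close>] by auto
        qed
      qed
      have sub: "f ` ({0..<n} \<times> {0..<k}) \<subseteq> {0..<P}"
        using Ppos unfolding f_def by auto
      have "card ({0..<n} \<times> {0..<k}) \<le> card {0..<P}"
        by (rule card_inj_on_le[OF inj sub]) simp
      then have "n * k \<le> nat P" by (simp add: card_cartesian_product)
      then have "int (n * k) \<le> P" using Ppos by linarith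
      then show False unfolding P_def by simp
    qed
  next
    assume xy: "x \<noteq> y"
    define G where "G D \<longleftrightarrow> (K \<le> D \<and> D \<le> P - K) \<or> (K - P \<le> D \<and> D \<le> -K)" for D
    have Gneg: "G (- D) \<longleftrightarrow> G D" for D unfolding G_def by linarith
    have Ppos: "P > 0" using m3 K2 mP by linarith
    define d where "d = (y - x) mod P"
    have dy: "(x + d) mod P = y" unfolding d_def using xr
      by (simp add: mod_add_right_eq mod_pos_pos_trivial)
    have dr: "1 \<le> d \<and> d \<le> P - 1"
    proof -
      have "0 \<le> d" "d < P" unfolding d_def using Ppos by auto
      moreover have "d \<noteq> 0" using dy xr xy by (auto simp: mod_pos_pos_trivial)
      ultimately show ?thesis by linarith
    qed
    obtain bo wo where bw1: "\<And>i. 1 \<le> i \<Longrightarrow> i \<le> n - 2 \<Longrightarrow> G (bo + int i * K) \<and> G (bo + int i * K - wo)"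
      and bw2: "G (d - wo)"
    proof (cases "K \<le> d \<and> d \<le> P - K")
      case True
      show ?thesis
      proof (rule that[of 0 0])
        show "G (0 + int i * K) \<and> G (0 + int i * K - 0)" if "1 \<le> i" "i \<le> n - 2" for i
          using ik[OF that] mP K2 unfolding G_def by arith
        show "G (d - 0)" using True unfolding G_def by auto
      qed
    next
      case F: False
      show ?thesis
      proof (cases "d < K")
        case True
        show ?thesis
        proof (rule that[of 0 "m - K"])
          show "G (0 + int i * K) \<and> G (0 + int i * K - (m - K))" if "1 \<le> i" "i \<le> n - 2" for i
            using ik[OF that] mP K2 unfolding G_def by arith
          show "G (d - (m - K))" using True dr mP m3 K2 unfolding G_def by auto
        qed
      next
        case False
        show ?thesis
        proof (rule that[of "K - 1" "K - 1"])
          show "G (K - 1 + int i * K) \<and> G (K - 1 + int i * K - (K - 1))" if "1 \<le> i" "i \<le> n - 2" for i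
            using ik[OF that] mP K2 unfolding G_def by arith
          show "G (d - (K - 1))" using False F dr mP m3 K2 unfolding G_def by auto
        qed
      qed
    qed
    define off where "off i = (if i = n - 1 then wo else bo + int i * K)" for i
    define ofs where "ofs v = (case v of VA \<Rightarrow> 0 | VB \<Rightarrow> d | VV i \<Rightarrow> off i)" for v
    define c where "c v = (x + ofs v) mod P" for v
    have G0: "G (ofs u - ofs v)" if adj: "K_adj0 n u v" "u \<in> K_verts n" "v \<in> K_verts n" for u v
    proof (cases u)
      case VA
      then obtain i where v: "v = VV i" "1 \<le> i" "i \<le> n - 2" using adj
        by (cases v) auto
      then have "i \<noteq> n - 1" using assms(2) by simp
      then show ?thesis using VA v bw1[OF v(2,3)] Gneg[of "bo + int i * K"] unfolding ofs_def off_def by simp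
    next
      case VB
      then obtain i where v: "v = VV i" "i = n - 1" using adj
        by (cases v) auto
      then show ?thesis using VB bw2 unfolding ofs_def off_def by simp
    next
      case (VV i)
      then obtain j where v: "v = VV j" "i \<noteq> j" "1 \<le> i" "i \<le> n - 1" "1 \<le> j" "j \<le> n - 1" using adj
        by (cases v) auto
      show ?thesis
      proof (cases "i = n - 1")
        case True
        then have "j \<le> n - 2" "j \<noteq> n - 1" using v by auto
        then show ?thesis using VV v True bw1[of j] Gneg[of "bo + int j * K - wo"] unfolding ofs_def off_def by simp
      next
        case Fi: False
        show ?thesis
        proof (cases "j = n - 1")
          case True
          then have "i \<le> n - 2" using v Fi by auto
          then show ?thesis using VV v True Fi bw1[of i] Gneg[of "bo + int i * K - wo"] unfolding ofs_def off_def by simp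
        next
          case False
          then have ij: "i \<le> n - 2" "j \<le> n - 2" using v Fi by auto
          have "i < j \<or> j < i" using v by auto
          moreover have "int i * K + K \<le> int j * K" if "i < j" using mulk[OF that] unfolding K_def .
          moreover have "int j * K + K \<le> int i * K" if "j < i" using mulk[OF that] unfolding K_def .
          ultimately have "G (int i * K - int j * K)" using ik[OF v(3) ij(1)] ik[OF v(5) ij(2)] mP K2
            unfolding G_def by arith
          then show ?thesis using VV v Fi False unfolding ofs_def off_def by simp
        qed
      qed
    qed
    have cok: "K \<le> \<bar>c u - c v\<bar> \<and> \<bar>c u - c v\<bar> \<le> P - K"
      if "K_adj n u v" "u \<in> K_verts n" "v \<in> K_verts n" for u v
    proof -
      have "G (ofs u - ofs v)"
        using that G0[of u v] G0[of v u] Gneg[of "ofs v - ofs u"] unfolding K_adj_def by auto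
      then show ?thesis unfolding c_def G_def using offs[of K P "ofs u" "ofs v" x] K2 Ppos by auto
    qed
    have "pq_coloring (k * n - 1) k (K_verts n) (K_adj n) c"
      unfolding col using cok Ppos unfolding c_def by auto
    moreover have "c VA = x" unfolding c_def ofs_def using xr by (simp add: mod_pos_pos_trivial)
    moreover have "c VB = y" unfolding c_def ofs_def using dy by simp
    ultimately show "\<exists>c. pq_coloring (k * n - 1) k (K_verts n) (K_adj n) c \<and> c VA = x \<and> c VB = y"
      by blast
  qed
qed

end
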